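(* Let $N\ge 1$, let $\lambda_1,\dots,\lambda_N$ be distinct real numbers and $\mu_1,\dots,\mu_N$ nonzero real constants. On $\mathbb{R}^{6N}$ with coordinates $\phi_{ij},\psi_{ij}$ ($i=1,2,3$, $j=1,\dots,N$) consider the nonlinearized spatial system \[ \begin{pmatrix}\phi_{1j}\\ \phi_{2j}\\ \phi_{3j}\end{pmatrix}_x=U(\tilde u,\lambda_j)\begin{pmatrix}\phi_{1j}\\ \phi_{2j}\\ \phi_{3j}\end{pmatrix},\qquad \begin{pmatrix}\psi_{1j}\\ \psi_{2j}\\ \psi_{3j}\end{pmatrix}_x=-U(\tilde u,\lambda_j)^T\begin{pmatrix}\psi_{1j}\\ \psi_{2j}\\ \psi_{3j}\end{pmatrix},\quad j=1,\dots,N, \] where $\tilde u=(\tilde q,\tilde r)^T$ with $\tilde q=\sqrt2(\langle P_1,BQ_2\rangle+\langle P_2,BQ_3\rangle)$, $\tilde r=\sqrt2(\langle P_2,BQ_1\rangle+\langle P_3,BQ_2\rangle)$. Then the functions \[\bar F_j=\sum_{i=1}^3\phi_{ij}\psi_{ij},\qquad 1\le j\le N,\] are integrals of motion of this system (constant along its solutions), they are in involution, $\{\bar F_k,\bar F_l\}=0$ for all $1\le k,l\le N$, with respect to the Poisson bracket below, and they are independent (their gradients are linearly independent at every point) over the region \[\Omega=\Big\{(\phi,\psi)\in\mathbb{R}^{6N}:\ \sum_{i=1}^3(\phi_{ij}^2+\psi_{ij}^2)\neq 0\ \text{for all } 1\le j\le N\Big\}.\]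
   Context: For $u=(q,r)^T$ and a parameter $\lambda$, $U(u,\lambda)=\begin{pmatrix}-2\lambda&\sqrt2 q&0\\ \sqrt2 r&0&\sqrt2 q\\ 0&\sqrt2 r&2\lambda\end{pmatrix}$. $B=\mathrm{diag}(\mu_1,\dots,\mu_N)$, $P_i=(\phi_{i1},\dots,\phi_{iN})^T$, $Q_i=(\psi_{i1},\dots,\psi_{iN})^T$ for $i=1,2,3$, and $\langle\cdot,\cdot\rangle$ is the standard inner product on $\mathbb{R}^N$. The Poisson bracket on $\mathbb{R}^{6N}$ is $\{F,G\}=\sum_{i=1}^3\big(\langle \tfrac{\partial F}{\partial Q_i},B^{-1}\tfrac{\partial G}{\partial P_i}\rangle-\langle \tfrac{\partial F}{\partial P_i},B^{-1}\tfrac{\partial G}{\partial Q_i}\rangle\big)$, where $\frac{\partial}{\partial P_i}=(\frac{\partial}{\partial\phi_{i1}},\dots,\frac{\partial}{\partial\phi_{iN}})^T$ and similarly for $Q_i$. *)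

theory Defs
  imports "HOL-Analysis.Analysis"
begin

text \<open>Phase space R^{6N}: a point is a pair (phi, psi); phi $ j $ i is the coordinate
  phi_{ij} (j ranges over the finite index type 'n with N = CARD('n) elements,
  i ranges over the type 3 with elements 1, 2, 3).\<close>

type_synonym 'n state = "(real^3^'n) \<times> (real^3^'n)"

definition Umat :: "real \<Rightarrow> real \<Rightarrow> real \<Rightarrow> real^3^3" where
  "Umat q r lam = vector [vector [-2*lam, sqrt 2 * q, 0],
                          vector [sqrt 2 * r, 0, sqrt 2 * q],
                          vector [0, sqrt 2 * r, 2*lam]]"

definition qt :: "('n::finite \<Rightarrow> real) \<Rightarrow> 'n state \<Rightarrow> real" where
  "qt mu z = sqrt 2 * ((\<Sum>j\<in>UNIV. fst z $ j $ 1 * mu j * snd z $ j $ 2)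
                     + (\<Sum>j\<in>UNIV. fst z $ j $ 2 * mu j * snd z $ j $ 3))"

definition rt :: "('n::finite \<Rightarrow> real) \<Rightarrow> 'n state \<Rightarrow> real" where
  "rt mu z = sqrt 2 * ((\<Sum>j\<in>UNIV. fst z $ j $ 2 * mu j * snd z $ j $ 1)
                     + (\<Sum>j\<in>UNIV. fst z $ j $ 3 * mu j * snd z $ j $ 2))"

definition vf :: "('n::finite \<Rightarrow> real) \<Rightarrow> ('n \<Rightarrow> real) \<Rightarrow> 'n state \<Rightarrow> 'n state" where
  "vf lam mu z =
     ((\<chi> j. Umat (qt mu z) (rt mu z) (lam j) *v (fst z $ j)),
      (\<chi> j. - (transpose (Umat (qt mu z) (rt mu z) (lam j)) *v (snd z $ j))))"

definition Fbar :: "'n::finite \<Rightarrow> 'n state \<Rightarrow> real" where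
  "Fbar j z = (\<Sum>i\<in>UNIV. fst z $ j $ i * snd z $ j $ i)"

definition e_phi :: "'n::finite \<Rightarrow> 3 \<Rightarrow> 'n state" where
  "e_phi j i = ((\<chi> k. \<chi> l. if k = j \<and> l = i then 1 else 0), 0)"

definition e_psi :: "'n::finite \<Rightarrow> 3 \<Rightarrow> 'n state" where
  "e_psi j i = (0, (\<chi> k. \<chi> l. if k = j \<and> l = i then 1 else 0))"

definition dphi :: "('n::finite state \<Rightarrow> real) \<Rightarrow> 'n state \<Rightarrow> 'n \<Rightarrow> 3 \<Rightarrow> real" where
  "dphi F z j i = frechet_derivative F (at z) (e_phi j i)"

definition dpsi :: "('n::finite state \<Rightarrow> real) \<Rightarrow> 'n state \<Rightarrow> 'n \<Rightarrow> 3 \<Rightarrow> real" where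
  "dpsi F z j i = frechet_derivative F (at z) (e_psi j i)"

text \<open>Poisson bracket
  {F,G} = sum_i (<dF/dQ_i, B^{-1} dG/dP_i> - <dF/dP_i, B^{-1} dG/dQ_i>).\<close>
definition pbracket :: "('n::finite \<Rightarrow> real) \<Rightarrow> ('n state \<Rightarrow> real) \<Rightarrow> ('n state \<Rightarrow> real)
                        \<Rightarrow> 'n state \<Rightarrow> real" where
  "pbracket mu F G z = (\<Sum>i\<in>UNIV. \<Sum>j\<in>UNIV.
      dpsi F z j i * dphi G z j i / mu j - dphi F z j i * dpsi G z j i / mu j)"

definition grad :: "('n::finite state \<Rightarrow> real) \<Rightarrow> 'n state \<Rightarrow> 'n state" where
  "grad F z = ((\<chi> j. \<chi> i. dphi F z j i), (\<chi> j. \<chi> i. dpsi F z j i))"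

definition Omega :: "'n::finite state set" where
  "Omega = {z. \<forall>j. (\<Sum>i\<in>UNIV. (fst z $ j $ i)\<^sup>2 + (snd z $ j $ i)\<^sup>2) \<noteq> 0}"

end

theory Submission imports Defs begin
lemma Fbar_deriv: "(Fbar k has_derivative (\<lambda>h. \<Sum>i\<in>UNIV. fst h $ k $ i * snd z $ k $ i + fst z $ k $ i * snd h $ k $ i)) (at z within S)"
  unfolding Fbar_def
  apply (rule has_derivative_sum)
  apply (rule has_derivative_eq_rhs)
   apply (rule has_derivative_mult)
  apply (rule bounded_linear_imp_has_derivative)
  apply (intro bounded_linear_compose[OF bounded_linear_vec_nth] bounded_linear_fst)
  apply (rule bounded_linear_imp_has_derivative)
  apply (intro bounded_linear_compose[OF bounded_linear_vec_nth] bounded_linear_snd)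
  apply (auto simp: algebra_simps)
  done
lemma fd: "frechet_derivative (Fbar k) (at z) = (\<lambda>h. \<Sum>i\<in>UNIV. fst h $ k $ i * snd z $ k $ i + fst z $ k $ i * snd h $ k $ i)"
  by (rule sym, rule frechet_derivative_at, rule Fbar_deriv)
lemma dphi_F: "dphi (Fbar k) z j i = (if j = k then snd z $ k $ i else 0)"
  unfolding dphi_def fd e_phi_def by (simp add: mult_delta_left)
lemma dpsi_F: "dpsi (Fbar k) z j i = (if j = k then fst z $ k $ i else 0)"
  unfolding dpsi_def fd e_psi_def by (simp add: mult_delta_right)
lemma pb: "pbracket mu (Fbar k) (Fbar l) z = 0"
  unfolding pbracket_def dphi_F dpsi_F by (intro sum.neutral ballI) (simp add: mult.commute)
lemma adj: "(\<Sum>i\<in>UNIV. ((A::real^'m^'m) *v a) $ i * b $ i) = (\<Sum>i\<in>UNIV. a $ i * (transpose A *v b) $ i)"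
proof -
  have "(\<Sum>i\<in>UNIV. (A *v a) $ i * b $ i) = (\<Sum>i\<in>UNIV. \<Sum>k\<in>UNIV. A $ i $ k * a $ k * b $ i)"
    unfolding matrix_vector_mult_def by (simp add: sum_distrib_right)
  also have "\<dots> = (\<Sum>k\<in>UNIV. \<Sum>i\<in>UNIV. A $ i $ k * a $ k * b $ i)"
    by (rule sum.swap)
  also have "\<dots> = (\<Sum>k\<in>UNIV. a $ k * (\<Sum>i\<in>UNIV. A $ i $ k * b $ i))"
    by (rule sum.cong[OF refl], subst sum_distrib_left, rule sum.cong[OF refl], simp add: mult_ac)
  also have "\<dots> = (\<Sum>i\<in>UNIV. a $ i * (transpose A *v b) $ i)"
    by (simp add: matrix_vector_mult_def transpose_def)
  finally show ?thesis .
qed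
theorem theorem3p1:
  fixes lam mu :: "'n::finite \<Rightarrow> real"
  assumes "inj lam"
    and "\<And>j. mu j \<noteq> 0"
  shows "(\<forall>(T::real set) (\<gamma>::real \<Rightarrow> 'n state). is_interval T \<longrightarrow>
            (\<forall>t\<in>T. (\<gamma> has_derivative (\<lambda>h. h *\<^sub>R vf lam mu (\<gamma> t))) (at t within T)) \<longrightarrow>
            (\<forall>j. \<forall>s\<in>T. \<forall>t\<in>T. Fbar j (\<gamma> s) = Fbar j (\<gamma> t)))
       \<and> (\<forall>k l z. pbracket mu (Fbar k) (Fbar l) z = 0)
       \<and> (\<forall>z\<in>Omega. \<forall>c :: 'n \<Rightarrow> real.
            (\<Sum>j\<in>UNIV. c j *\<^sub>R grad (Fbar j) z) = 0 \<longrightarrow> (\<forall>j. c j = 0))"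
proof (intro conjI)
  show "\<forall>k l z. pbracket mu (Fbar k) (Fbar l) z = 0" using pb by blast
next
  show "\<forall>(T::real set) (\<gamma>::real \<Rightarrow> 'n state). is_interval T \<longrightarrow>
            (\<forall>t\<in>T. (\<gamma> has_derivative (\<lambda>h. h *\<^sub>R vf lam mu (\<gamma> t))) (at t within T)) \<longrightarrow>
            (\<forall>j. \<forall>s\<in>T. \<forall>t\<in>T. Fbar j (\<gamma> s) = Fbar j (\<gamma> t))"
  proof (intro allI impI)
    fix T :: "real set" and \<gamma> :: "real \<Rightarrow> 'n state" and j
    assume iv: "is_interval T" and d: "\<forall>t\<in>T. (\<gamma> has_derivative (\<lambda>h. h *\<^sub>R vf lam mu (\<gamma> t))) (at t within T)"
    have "\<forall>t\<in>T. ((Fbar j \<circ> \<gamma>) has_derivative (\<lambda>h. 0)) (at t within T)"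
    proof
      fix t assume t: "t \<in> T"
      define U where "U = Umat (qt mu (\<gamma> t)) (rt mu (\<gamma> t)) (lam j)"
      define a where "a = fst (\<gamma> t) $ j"
      define b where "b = snd (\<gamma> t) $ j"
      have h1: "((Fbar j \<circ> \<gamma>) has_derivative (\<lambda>h. \<Sum>i\<in>UNIV. fst (h *\<^sub>R vf lam mu (\<gamma> t)) $ j $ i * snd (\<gamma> t) $ j $ i + fst (\<gamma> t) $ j $ i * snd (h *\<^sub>R vf lam mu (\<gamma> t)) $ j $ i)) (at t within T)"
        using diff_chain_within[OF d[rule_format, OF t] Fbar_deriv[of j "\<gamma> t" "\<gamma> ` T"]]
        by (simp add: o_def)
      have "(\<Sum>i\<in>UNIV. fst (h *\<^sub>R vf lam mu (\<gamma> t)) $ j $ i * snd (\<gamma> t) $ j $ i + fst (\<gamma> t) $ j $ i * snd (h *\<^sub>R vf lam mu (\<gamma> t)) $ j $ i)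
           = h * ((\<Sum>i\<in>UNIV. (U *v a) $ i * b $ i) - (\<Sum>i\<in>UNIV. a $ i * (transpose U *v b) $ i))" for h
        unfolding vf_def U_def a_def b_def
        by (simp add: sum_distrib_left sum_subtractf algebra_simps sum.distrib)
      also have "\<dots> h = 0" for h using adj[of U a b] by simp
      finally show "((Fbar j \<circ> \<gamma>) has_derivative (\<lambda>h. 0)) (at t within T)"
        using h1 by simp
    qed
    then obtain c where "\<forall>x\<in>T. (Fbar j \<circ> \<gamma>) x = c"
      using has_derivative_zero_constant[OF is_interval_convex[OF iv]] by blast
    then show "\<forall>s\<in>T. \<forall>t\<in>T. Fbar j (\<gamma> s) = Fbar j (\<gamma> t)" by simp
  qed
next
  show "\<forall>z\<in>Omega. \<forall>c :: 'n \<Rightarrow> real.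
            (\<Sum>j\<in>UNIV. c j *\<^sub>R grad (Fbar j) z) = 0 \<longrightarrow> (\<forall>j. c j = 0)"
  proof (intro ballI allI impI)
    fix z :: "'n state" and c :: "'n \<Rightarrow> real" and j
    assume z: "z \<in> Omega" and s: "(\<Sum>j\<in>UNIV. c j *\<^sub>R grad (Fbar j) z) = 0"
    have "\<forall>i. c j * snd z $ j $ i = 0 \<and> c j * fst z $ j $ i = 0"
    proof
      fix i
      have "fst (\<Sum>j\<in>UNIV. c j *\<^sub>R grad (Fbar j) z) $ j $ i = 0"
           "snd (\<Sum>j\<in>UNIV. c j *\<^sub>R grad (Fbar j) z) $ j $ i = 0" using s by auto
      then show "c j * snd z $ j $ i = 0 \<and> c j * fst z $ j $ i = 0"
        by (simp add: grad_def dphi_F dpsi_F fst_sum snd_sum sum_component if_distrib cong: if_cong)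
    qed
    moreover have "(\<Sum>i\<in>UNIV. (fst z $ j $ i)\<^sup>2 + (snd z $ j $ i)\<^sup>2) \<noteq> 0"
      using z by (simp add: Omega_def)
    ultimately show "c j = 0"
    proof (cases "c j = 0")
      case False
      assume h: "\<forall>i. c j * snd z $ j $ i = 0 \<and> c j * fst z $ j $ i = 0"
        and ne: "(\<Sum>i\<in>UNIV. (fst z $ j $ i)\<^sup>2 + (snd z $ j $ i)\<^sup>2) \<noteq> 0"
      from h False have "\<forall>i. snd z $ j $ i = 0 \<and> fst z $ j $ i = 0" by simp
      then have "(\<Sum>i\<in>UNIV. (fst z $ j $ i)\<^sup>2 + (snd z $ j $ i)\<^sup>2) = 0" by simp
      with ne show ?thesis by simp
    qed
  qed
qed

end
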